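(* There exists a countable nilpotent group $G$ of nilpotency class $2$ such that the subgroup conjugacy relation of $G$ on $\mathrm{Sub}(G)$ is not smooth.
   Context: For a countable group $G$, $\mathrm{Sub}(G)$ is the set of subgroups of $G$ with the (Polish) topology inherited from $2^G=\{0,1\}^G$. The subgroup conjugacy relation is the equivalence relation on $\mathrm{Sub}(G)$ given by $H\sim L$ iff $gHg^{-1}=L$ for some $g\in G$. A Borel equivalence relation $E$ on a standard Borel space $X$ is smooth if there is a Borel map $f$ from $X$ to a standard Borel space with $x\mathrel{E}y\iff f(x)=f(y)$. *)

theory Defs
  imports "HOL-Analysis.Analysis" "HOL-Algebra.Algebra"
begin

definition grp_commutator :: "('a, 'b) monoid_scheme \<Rightarrow> 'a \<Rightarrow> 'a \<Rightarrow> 'a" where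
  "grp_commutator G x y = x \<otimes>\<^bsub>G\<^esub> y \<otimes>\<^bsub>G\<^esub> inv\<^bsub>G\<^esub> x \<otimes>\<^bsub>G\<^esub> inv\<^bsub>G\<^esub> y"

text \<open>Lower central series, indexed from 0: lcs G 0 = G (= gamma_1),
  lcs G (Suc n) = [lcs G n, G] (= gamma_(n+2)).\<close>
fun lcs :: "('a, 'b) monoid_scheme \<Rightarrow> nat \<Rightarrow> 'a set" where
  "lcs G 0 = carrier G"
| "lcs G (Suc n) = generate G {grp_commutator G x y | x y. x \<in> lcs G n \<and> y \<in> carrier G}"

definition nilpotent_of_class :: "('a, 'b) monoid_scheme \<Rightarrow> nat \<Rightarrow> bool" where
  "nilpotent_of_class G c \<longleftrightarrow> group G \<and> lcs G c = {\<one>\<^bsub>G\<^esub>} \<and> (\<forall>k<c. lcs G k \<noteq> {\<one>\<^bsub>G\<^esub>})"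

text \<open>Sub(G) for a group whose carrier is a subset of nat, embedded in 2^nat via indicator
  functions (coordinates outside carrier G are constantly False, so this is homeomorphic
  to Sub(G) as a subspace of 2^G).\<close>
definition Sub_space :: "(nat, 'b) monoid_scheme \<Rightarrow> (nat \<Rightarrow> bool) set" where
  "Sub_space G = {(\<lambda>n. n \<in> H) | H. subgroup H G}"

definition Sub_measurable :: "(nat, 'b) monoid_scheme \<Rightarrow> (nat \<Rightarrow> bool) measure" where
  "Sub_measurable G = restrict_space (borel :: (nat \<Rightarrow> bool) measure) (Sub_space G)"

definition subgroup_conj :: "(nat, 'b) monoid_scheme \<Rightarrow> (nat \<Rightarrow> bool) \<Rightarrow> (nat \<Rightarrow> bool) \<Rightarrow> bool" where
  "subgroup_conj G x y \<longleftrightarrow> (\<exists>g\<in>carrier G.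
      (\<lambda>h. g \<otimes>\<^bsub>G\<^esub> h \<otimes>\<^bsub>G\<^esub> inv\<^bsub>G\<^esub> g) ` {n. x n} = {n. y n})"

text \<open>Smoothness: a Borel reduction to the standard Borel space R (every standard Borel
  space Borel-embeds into R, so this is the usual notion).\<close>
definition smooth_on :: "'a measure \<Rightarrow> ('a \<Rightarrow> 'a \<Rightarrow> bool) \<Rightarrow> bool" where
  "smooth_on M E \<longleftrightarrow> (\<exists>f \<in> measurable M (borel :: real measure).
      \<forall>x\<in>space M. \<forall>y\<in>space M. E x y \<longleftrightarrow> f x = f y)"

end

theory Submission
  imports Defs "HOL-Probability.Probability" "HOL-Library.Nat_Bijection"
begin

instance bool :: second_countable_topology
proof
  let ?B = "range (\<lambda>n::bool. {n})"
  have "\<And>S. generate_topology ?B (\<Union>x\<in>S. {x})"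
    by (intro generate_topology_Union) (auto intro: generate_topology.intros)
  then have "open = generate_topology ?B"
  proof (intro ext iffI)
    fix S :: "bool set"
    assume "\<And>S. generate_topology ?B (\<Union>x\<in>S. {x})"
    then show "generate_topology ?B S" if "open S" by simp
    show "open S" if "generate_topology ?B S" by (rule discrete_topology_class.open_discrete)
  qed
  moreover have "countable ?B" by simp
  ultimately show "\<exists>B::bool set set. countable B \<and> open = generate_topology B" by blast
qed


type_synonym trip = "nat set \<times> nat set \<times> nat set"

definition sd :: "nat set \<Rightarrow> nat set \<Rightarrow> nat set" where
  "sd A B = {i. (i \<in> A) \<noteq> (i \<in> B)}"

definition tmul :: "trip \<Rightarrow> trip \<Rightarrow> trip" where
  "tmul x y = (case x of (a,b,c) \<Rightarrow> case y of (a',b',c') \<Rightarrow> (sd a a', sd b b', sd (sd c c') (a \<inter> b')))"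

definition fin3 :: "trip \<Rightarrow> bool" where
  "fin3 x = (case x of (a,b,c) \<Rightarrow> finite a \<and> finite b \<and> finite c)"

definition enc :: "trip \<Rightarrow> nat" where
  "enc x = (case x of (a,b,c) \<Rightarrow> prod_encode (set_encode a, prod_encode (set_encode b, set_encode c)))"

definition dec :: "nat \<Rightarrow> trip" where
  "dec n = (set_decode (fst (prod_decode n)), set_decode (fst (prod_decode (snd (prod_decode n)))),
            set_decode (snd (prod_decode (snd (prod_decode n)))))"

lemma finite_sd[simp]: "finite A \<Longrightarrow> finite B \<Longrightarrow> finite (sd A B)"
proof -
  assume "finite A" "finite B"
  then have "finite (A \<union> B)" by simp
  moreover have "sd A B \<subseteq> A \<union> B" by (auto simp: sd_def)
  ultimately show ?thesis by (rule finite_subset[rotated])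
qed

lemma fin3_dec[simp]: "fin3 (dec n)"
  by (simp add: fin3_def dec_def finite_set_decode)

lemma dec_enc[simp]: "fin3 x \<Longrightarrow> dec (enc x) = x"
  by (cases x) (simp add: fin3_def dec_def enc_def set_encode_inverse)

lemma enc_dec[simp]: "enc (dec n) = n"
  by (simp add: dec_def enc_def set_decode_inverse)

lemma fin3_tmul[simp]: "fin3 x \<Longrightarrow> fin3 y \<Longrightarrow> fin3 (tmul x y)"
  by (cases x; cases y) (simp add: fin3_def tmul_def)

lemma dec_inj: "dec m = dec n \<Longrightarrow> m = n"
  by (metis enc_dec)

definition GG :: "nat monoid" where
  "GG = \<lparr>carrier = UNIV, mult = (\<lambda>x y. enc (tmul (dec x) (dec y))), one = enc ({},{},{})\<rparr>"

lemma GG_carrier[simp]: "carrier GG = UNIV" by (simp add: GG_def)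
lemma GG_mult: "x \<otimes>\<^bsub>GG\<^esub> y = enc (tmul (dec x) (dec y))" by (simp add: GG_def)
lemma GG_one: "\<one>\<^bsub>GG\<^esub> = enc ({},{},{})" by (simp add: GG_def)

definition tinv :: "trip \<Rightarrow> trip" where
  "tinv x = (case x of (a,b,c) \<Rightarrow> (a, b, sd c (a \<inter> b)))"

lemma fin3_tinv[simp]: "fin3 x \<Longrightarrow> fin3 (tinv x)"
  by (cases x) (simp add: fin3_def tinv_def)

lemma tmul_assoc: "tmul (tmul x y) z = tmul x (tmul y z)"
  by (cases x; cases y; cases z) (auto simp: tmul_def sd_def)

lemma tmul_one: "tmul ({},{},{}) x = x"
  by (cases x) (auto simp: tmul_def sd_def)

lemma tinv_l: "tmul (tinv x) x = ({},{},{})"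
  by (cases x) (auto simp: tmul_def tinv_def sd_def)

lemma fin3_one[simp]: "fin3 ({},{},{})" by (simp add: fin3_def)

lemma group_GG: "group GG"
proof (rule groupI)
  fix x y z :: nat
  show "x \<otimes>\<^bsub>GG\<^esub> y \<otimes>\<^bsub>GG\<^esub> z = x \<otimes>\<^bsub>GG\<^esub> (y \<otimes>\<^bsub>GG\<^esub> z)"
    by (simp add: tmul_assoc GG_mult)
  show "\<one>\<^bsub>GG\<^esub> \<otimes>\<^bsub>GG\<^esub> x = x" by (simp add: tmul_one GG_mult GG_one)
  show "\<exists>y\<in>carrier GG. y \<otimes>\<^bsub>GG\<^esub> x = \<one>\<^bsub>GG\<^esub>"
    by (rule bexI[of _ "enc (tinv (dec x))"]) (simp_all add: tinv_l GG_mult GG_one)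
qed (simp_all add: GG_mult GG_one)

lemma inv_GG: "inv\<^bsub>GG\<^esub> x = enc (tinv (dec x))"
  by (rule group.inv_equality[OF group_GG]) (simp_all add: tinv_l GG_mult GG_one)

lemma dec_mul[simp]: "dec (x \<otimes>\<^bsub>GG\<^esub> y) = tmul (dec x) (dec y)" by (simp add: GG_mult)
lemma dec_inv[simp]: "dec (inv\<^bsub>GG\<^esub> x) = tinv (dec x)" by (simp add: inv_GG)

lemma dec_comm: "dec (grp_commutator GG x y) =
  ({}, {}, sd (fst (dec x) \<inter> fst (snd (dec y))) (fst (dec y) \<inter> fst (snd (dec x))))"
  unfolding grp_commutator_def dec_mul dec_inv
  by (cases "dec x"; cases "dec y") (auto simp: tmul_def tinv_def sd_def)

lemma dec_conj: "dec (g \<otimes>\<^bsub>GG\<^esub> h \<otimes>\<^bsub>GG\<^esub> inv\<^bsub>GG\<^esub> g) =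
  (fst (dec h), fst (snd (dec h)), sd (sd (snd (snd (dec h))) (fst (dec g) \<inter> fst (snd (dec h))))
     (fst (dec h) \<inter> fst (snd (dec g))))"
  unfolding dec_mul dec_inv
  by (cases "dec g"; cases "dec h") (auto simp: tmul_def tinv_def sd_def)


definition ZZ :: "nat set" where "ZZ = {n. fst (dec n) = {} \<and> fst (snd (dec n)) = {}}"

lemma dec_one[simp]: "dec \<one>\<^bsub>GG\<^esub> = ({},{},{})" by (simp add: GG_one)

lemma subgroup_ZZ: "subgroup ZZ GG"
proof (rule group.subgroupI[OF group_GG])
  show "ZZ \<subseteq> carrier GG" by simp
  have "\<one>\<^bsub>GG\<^esub> \<in> ZZ" by (simp add: ZZ_def)
  then show "ZZ \<noteq> {}" by blast
  fix a b assume "a \<in> ZZ" "b \<in> ZZ"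
  then show "inv\<^bsub>GG\<^esub> a \<in> ZZ" "a \<otimes>\<^bsub>GG\<^esub> b \<in> ZZ"
    unfolding ZZ_def dec_mul dec_inv
    by (auto simp: tinv_def tmul_def sd_def split: prod.splits)
qed

lemma comm_in_ZZ: "grp_commutator GG x y \<in> ZZ"
  unfolding ZZ_def by (simp add: dec_comm)

lemma comm_ZZ_one: "x \<in> ZZ \<Longrightarrow> grp_commutator GG x y = \<one>\<^bsub>GG\<^esub>"
  by (rule dec_inj) (simp add: dec_comm ZZ_def sd_def)

lemma lcs1_ZZ: "lcs GG (Suc 0) \<subseteq> ZZ"
  by simp (rule group.generate_subgroup_incl[OF group_GG _ subgroup_ZZ], auto simp: comm_in_ZZ)

lemma lcs2: "lcs GG 2 = {\<one>\<^bsub>GG\<^esub>}"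
proof -
  have "lcs GG 2 = generate GG {grp_commutator GG x y |x y. x \<in> lcs GG (Suc 0) \<and> y \<in> carrier GG}"
    by (simp only: numeral_2_eq_2 lcs.simps(2)[of GG "Suc 0"])
  also have "{grp_commutator GG x y |x y. x \<in> lcs GG (Suc 0) \<and> y \<in> carrier GG} \<subseteq> {\<one>\<^bsub>GG\<^esub>}"
    using lcs1_ZZ comm_ZZ_one by blast
  then have "generate GG {grp_commutator GG x y |x y. x \<in> lcs GG (Suc 0) \<and> y \<in> carrier GG} \<subseteq> {\<one>\<^bsub>GG\<^esub>}"
    by (rule group.generate_subgroup_incl[OF group_GG _ group.triv_subgroup[OF group_GG]])
  moreover have "\<one>\<^bsub>GG\<^esub> \<in> generate GG {grp_commutator GG x y |x y. x \<in> lcs GG (Suc 0) \<and> y \<in> carrier GG}"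
    by (rule generate.one)
  ultimately show ?thesis by blast
qed

lemma lcs1_nontriv: "lcs GG (Suc 0) \<noteq> {\<one>\<^bsub>GG\<^esub>}"
proof
  assume h: "lcs GG (Suc 0) = {\<one>\<^bsub>GG\<^esub>}"
  let ?c = "grp_commutator GG (enc ({0},{},{})) (enc ({},{0},{}))"
  have "?c \<in> lcs GG (Suc 0)" by (auto intro!: generate.incl)
  then have "?c = \<one>\<^bsub>GG\<^esub>" using h by blast
  then have "dec ?c = ({},{},{})" by simp
  moreover have "dec ?c = ({},{},{0})" by (simp add: dec_comm fin3_def sd_def)
  ultimately show False by simp
qed

lemma nil_GG: "nilpotent_of_class GG 2"
proof -
  have "lcs GG k \<noteq> {\<one>\<^bsub>GG\<^esub>}" if "k < 2" for k
  proof -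
    have "k = 0 \<or> k = Suc 0" using that by linarith
    moreover have "lcs GG 0 \<noteq> {\<one>\<^bsub>GG\<^esub>}" by (simp add: GG_def) (metis UNIV_I empty_iff insert_iff n_not_Suc_n)
    ultimately show ?thesis using lcs1_nontriv by blast
  qed
  then show ?thesis unfolding nilpotent_of_class_def using group_GG lcs2 by blast
qed

definition Hx :: "(nat \<Rightarrow> bool) \<Rightarrow> nat set" where
  "Hx x = {n. fst (dec n) = {} \<and> snd (snd (dec n)) = {i \<in> fst (snd (dec n)). x i}}"

lemma subgroup_Hx: "subgroup (Hx x) GG"
proof (rule group.subgroupI[OF group_GG])
  show "Hx x \<subseteq> carrier GG" by simp
  have "\<one>\<^bsub>GG\<^esub> \<in> Hx x" by (simp add: Hx_def)
  then show "Hx x \<noteq> {}" by blast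
  fix a b assume "a \<in> Hx x" "b \<in> Hx x"
  then show "inv\<^bsub>GG\<^esub> a \<in> Hx x" "a \<otimes>\<^bsub>GG\<^esub> b \<in> Hx x"
    unfolding Hx_def dec_mul dec_inv
    by (auto simp: tinv_def tmul_def sd_def split: prod.splits)
qed

lemma fin3_special: "finite b \<Longrightarrow> fin3 ({}, b, {i \<in> b. x i})"
  by (simp add: fin3_def)

lemma conj_imp_fin:
  assumes g: "(\<lambda>h. g \<otimes>\<^bsub>GG\<^esub> h \<otimes>\<^bsub>GG\<^esub> inv\<^bsub>GG\<^esub> g) ` Hx x = Hx y"
  shows "finite {i. x i \<noteq> y i}"
proof -
  define a where "a = fst (dec g)"
  have fa: "finite a" using fin3_dec[of g] unfolding a_def fin3_def by (auto split: prod.splits)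
  have "{i. x i \<noteq> y i} \<subseteq> a"
  proof
    fix i assume i: "i \<in> {i. x i \<noteq> y i}"
    define h where "h = enc ({}, {i}, {j \<in> {i}. x j})"
    have dh: "dec h = ({}, {i}, {j \<in> {i}. x j})" unfolding h_def by (rule dec_enc, rule fin3_special) simp
    have "h \<in> Hx x" by (simp add: Hx_def dh)
    then have mem: "g \<otimes>\<^bsub>GG\<^esub> h \<otimes>\<^bsub>GG\<^esub> inv\<^bsub>GG\<^esub> g \<in> Hx y" using g by blast
    let ?c = "g \<otimes>\<^bsub>GG\<^esub> h \<otimes>\<^bsub>GG\<^esub> inv\<^bsub>GG\<^esub> g"
    have c1: "snd (snd (dec ?c)) = {j \<in> fst (snd (dec ?c)). y j}" using mem by (simp add: Hx_def)
    have c2: "snd (snd (dec ?c)) = sd (sd {j \<in> {i}. x j} (a \<inter> {i})) {}"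
      by (simp add: dec_conj dh a_def del: dec_mul dec_inv)
    have c3: "fst (snd (dec ?c)) = {i}"
      by (simp add: dec_conj dh del: dec_mul dec_inv)
    have "sd (sd {j \<in> {i}. x j} (a \<inter> {i})) {} = {j \<in> {i}. y j}" using c1 c2 c3 by simp
    then have "i \<in> sd (sd {j \<in> {i}. x j} (a \<inter> {i})) {} \<longleftrightarrow> y i" by blast
    then show "i \<in> a" using i by (auto simp: sd_def)
  qed
  then show ?thesis using fa by (rule finite_subset)
qed

lemma fin_imp_conj:
  assumes fD: "finite {i. x i \<noteq> y i}"
  shows "(\<lambda>h. enc ({i. x i \<noteq> y i},{},{}) \<otimes>\<^bsub>GG\<^esub> h \<otimes>\<^bsub>GG\<^esub> inv\<^bsub>GG\<^esub> enc ({i. x i \<noteq> y i},{},{})) ` Hx x = Hx y"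
    (is "?f ` _ = _")
proof -
  define D where "D = {i. x i \<noteq> y i}"
  have dg: "dec (enc (D,{},{})) = (D,{},{})" using fD unfolding D_def by (simp add: fin3_def)
  have key: "dec (?f h) = ({}, fst (snd (dec h)), {i \<in> fst (snd (dec h)). y i})" if "h \<in> Hx x" for h
    using that unfolding dec_conj D_def[symmetric] dg Hx_def
    by (auto simp: sd_def D_def)
  show ?thesis
  proof (intro equalityI subsetI)
    fix n assume "n \<in> ?f ` Hx x"
    then obtain h where "h \<in> Hx x" "n = ?f h" by blast
    then show "n \<in> Hx y" using key by (simp add: Hx_def)
  next
    fix n assume n: "n \<in> Hx y"
    define b where "b = fst (snd (dec n))"
    have fb: "finite b" using fin3_dec[of n] unfolding b_def fin3_def by (auto split: prod.splits)
    define h where "h = enc ({}, b, {i \<in> b. x i})"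
    have dh: "dec h = ({}, b, {i \<in> b. x i})" unfolding h_def by (rule dec_enc, rule fin3_special, rule fb)
    have hx: "h \<in> Hx x" by (simp add: Hx_def dh)
    have "dec (?f h) = dec n" using key[OF hx] n unfolding dh b_def Hx_def
      by (simp add: prod_eq_iff)
    then have "?f h = n" by (rule dec_inj)
    then show "n \<in> ?f ` Hx x" using hx by blast
  qed
qed

lemma conj_iff: "subgroup_conj GG (\<lambda>n. n \<in> Hx x) (\<lambda>n. n \<in> Hx y) \<longleftrightarrow> finite {i. x i \<noteq> y i}"
proof
  assume "subgroup_conj GG (\<lambda>n. n \<in> Hx x) (\<lambda>n. n \<in> Hx y)"
  then obtain g where "(\<lambda>h. g \<otimes>\<^bsub>GG\<^esub> h \<otimes>\<^bsub>GG\<^esub> inv\<^bsub>GG\<^esub> g) ` Hx x = Hx y"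
    unfolding subgroup_conj_def by auto
  then show "finite {i. x i \<noteq> y i}" by (rule conj_imp_fin)
next
  assume "finite {i. x i \<noteq> y i}"
  from fin_imp_conj[OF this] show "subgroup_conj GG (\<lambda>n. n \<in> Hx x) (\<lambda>n. n \<in> Hx y)"
    unfolding subgroup_conj_def by auto
qed



definition BB :: "bool measure" where "BB = measure_pmf (bernoulli_pmf (1/2))"
definition BM :: "(nat \<Rightarrow> bool) measure" where "BM = Pi\<^sub>M UNIV (\<lambda>_. BB)"

lemma prob_BB: "prob_space BB" by (simp add: BB_def prob_space_measure_pmf)
lemma ps_BM: "prob_space BM" unfolding BM_def by (rule prob_space_PiM) (rule prob_BB)
lemma space_BB[simp]: "space BB = UNIV" by (simp add: BB_def)
lemma sets_BB[simp]: "sets BB = UNIV" by (simp add: BB_def)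
lemma space_BM[simp]: "space BM = UNIV" by (simp add: BM_def space_PiM)

lemma emeasure_BB_single: "emeasure BB {b} = ennreal (1/2)"
  by (cases b) (simp_all add: BB_def emeasure_pmf_single)

lemma singleton_null: "{y} \<in> null_sets BM"
proof -
  interpret prob_space BM by (rule ps_BM)
  define E where "E n = prod_emb UNIV (\<lambda>_. BB) {..<n} (Pi\<^sub>E {..<n} (\<lambda>i. {y i}))" for n
  have Esets: "E n \<in> sets BM" for n unfolding E_def BM_def by (rule sets_PiM_I) auto
  have Emeas: "emeasure BM (E n) = ennreal ((1/2)^n)" for n
  proof -
    have "emeasure BM (E n) = (\<Prod>i\<in>{..<n}. emeasure BB {y i})"
      unfolding E_def BM_def by (rule emeasure_PiM_emb) (auto simp: prob_BB)
    also have "\<dots> = (\<Prod>i\<in>{..<n}. ennreal (1/2))" by (simp only: emeasure_BB_single)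
    also have "\<dots> = ennreal (1/2) ^ n" by (simp only: prod_constant card_lessThan)
    also have "\<dots> = ennreal ((1/2)^n)" by (rule ennreal_power) simp
    finally show ?thesis .
  qed
  have yE: "{y} = (\<Inter>n. E n)"
    by (auto simp: E_def prod_emb_def PiE_iff restrict_def fun_eq_iff space_PiM)
  have ys: "{y} \<in> sets BM" unfolding yE using Esets by auto
  have le: "measure BM {y} \<le> (1/2)^n" for n
  proof -
    have "measure BM {y} \<le> measure BM (E n)" using Esets yE by (intro finite_measure_mono) auto
    also have "\<dots> = (1/2)^n" using Emeas by (simp add: measure_def)
    finally show ?thesis .
  qed
  have "(\<lambda>n. (1/2::real)^n) \<longlonglongrightarrow> 0" by (rule LIMSEQ_realpow_zero) auto
  then have "measure BM {y} \<le> 0" using le by (intro LIMSEQ_le_const[where X="\<lambda>n. (1/2::real)^n"]) auto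
  then have "measure BM {y} = 0" by (simp add: measure_nonneg antisym)
  then have "emeasure BM {y} = 0" by (simp add: emeasure_eq_measure)
  then show ?thesis using ys by (intro null_setsI)
qed

lemma countable_null: "countable C \<Longrightarrow> C \<in> null_sets BM"
proof -
  assume "countable C"
  have "(\<Union>y\<in>C. {y}) \<in> null_sets BM" by (rule null_sets_UN') (fact, rule singleton_null)
  then show ?thesis by simp
qed

definition coordA :: "nat \<Rightarrow> (nat \<Rightarrow> bool) set set" where
  "coordA i = sigma_sets (space BM) {(\<lambda>x. x i) -` B0 \<inter> space BM | B0. B0 \<in> sets BB}"

lemma tail:
  assumes S: "S \<in> sets BM" and invS: "\<And>x y. x \<in> S \<Longrightarrow> finite {i. x i \<noteq> y i} \<Longrightarrow> y \<in> S"
  shows "S \<in> sigma_sets (space BM) (\<Union> (coordA ` {n..}))"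
proof -
  define N where "N = sigma (space BM) (\<Union> (coordA ` {n..}))"
  have sub: "\<Union> (coordA ` {n..}) \<subseteq> Pow (space BM)" by auto
  have spN: "space N = UNIV" unfolding N_def by (simp add: space_measure_of_conv)
  have setsN: "sets N = sigma_sets (space BM) (\<Union> (coordA ` {n..}))"
    unfolding N_def by (rule sets_measure_of[OF sub])
  define r where "r = (\<lambda>x i. if i < n then False else (x i :: bool))"
  have rm: "r \<in> measurable N BM" unfolding BM_def r_def
  proof (rule measurable_PiM_single')
    fix i :: nat
    show "(\<lambda>x. if i < n then False else x i) \<in> measurable N BB"
    proof (cases "i < n")
      case True then show ?thesis by simp
    next
      case False
      have "(\<lambda>x. x i) \<in> measurable N BB"
      proof (rule measurableI)
        fix B0 :: "bool set" assume "B0 \<in> sets BB"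
        then have "(\<lambda>x. x i) -` B0 \<inter> space BM \<in> coordA i" unfolding coordA_def
          by (intro sigma_sets.Basic) blast
        then have "(\<lambda>x. x i) -` B0 \<inter> space BM \<in> \<Union> (coordA ` {n..})" using False by auto
        then show "(\<lambda>x. x i) -` B0 \<inter> space N \<in> sets N" unfolding setsN spN
          by (simp add: sigma_sets.Basic)
      qed simp
      then show ?thesis using False by simp
    qed
  qed simp
  then have "r -` S \<inter> space N \<in> sets N" using S by (rule measurable_sets)
  moreover have "r -` S \<inter> space N = S"
  proof -
    have f1: "finite {i. x i \<noteq> r x i}" for x
      by (rule finite_subset[of _ "{..<n}"]) (auto simp: r_def split: if_splits)
    have f2: "finite {i. r x i \<noteq> x i}" for x
      by (rule finite_subset[of _ "{..<n}"]) (auto simp: r_def split: if_splits)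
    have "x \<in> S \<longleftrightarrow> r x \<in> S" for x
      using invS[of x "r x", OF _ f1] invS[of "r x" x, OF _ f2] by blast
    then show ?thesis by (auto simp: spN)
  qed
  ultimately show ?thesis using setsN by simp
qed

lemma rat_sep:
  fixes a b :: real
  assumes "\<forall>q::rat. (a \<le> of_rat q) = (b \<le> of_rat q)"
  shows "a = b"
proof (rule ccontr)
  assume "a \<noteq> b"
  then consider "a < b" | "b < a" by linarith
  then show False
  proof cases
    case 1
    then obtain r where "r \<in> \<rat>" "a < r" "r < b" using Rats_dense_in_real by blast
    then obtain q where "r = of_rat q" by (auto elim: Rats_cases)
    then show False using assms \<open>a < r\<close> \<open>r < b\<close> by (metis less_eq_real_def not_le)
  next
    case 2
    then obtain r where "r \<in> \<rat>" "b < r" "r < a" using Rats_dense_in_real by blast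
    then obtain q where "r = of_rat q" by (auto elim: Rats_cases)
    then show False using assms \<open>b < r\<close> \<open>r < a\<close> by (metis less_eq_real_def not_le)
  qed
qed

lemma E0_nonsmooth:
  fixes g :: "(nat \<Rightarrow> bool) \<Rightarrow> real"
  assumes g: "g \<in> borel_measurable BM"
    and inv: "\<And>x y. finite {i. x i \<noteq> y i} \<Longrightarrow> g x = g y"
    and cls: "\<And>x y. g x = g y \<Longrightarrow> finite {i. x i \<noteq> y i}"
  shows False
proof -
  interpret prob_space BM by (rule ps_BM)
  have sa: "\<And>i. sigma_algebra (space BM) (coordA i)"
    unfolding coordA_def by (rule sigma_algebra_sigma_sets) auto
  have iv: "indep_vars (\<lambda>_. BB) (\<lambda>i x. x i) UNIV"
  proof (subst indep_vars_iff_distr_eq_PiM)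
    show "UNIV \<noteq> {}" by simp
    show "random_variable BB (\<lambda>x. x i)" for i unfolding BM_def by simp
    have "distr BM BB (\<lambda>x. x i) = BB" for i
      unfolding BM_def by (rule distr_PiM_component) (auto simp: prob_BB)
    moreover have "(\<lambda>x. \<lambda>i\<in>UNIV. x i) = (\<lambda>x::nat\<Rightarrow>bool. x)" by (auto simp: restrict_def fun_eq_iff)
    ultimately show "distr BM (Pi\<^sub>M UNIV (\<lambda>_. BB)) (\<lambda>x. \<lambda>i\<in>UNIV. x i) = Pi\<^sub>M UNIV (\<lambda>i. distr BM BB (\<lambda>x. x i))"
      by (simp add: BM_def[symmetric])
  qed
  then have ind: "indep_sets coordA UNIV"
    unfolding indep_vars_def coordA_def by simp
  define P where "P q = (prob {x. g x \<le> real_of_rat q} = 1)" for q :: rat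
  have ae1: "AE x in BM. (g x \<le> real_of_rat q) = P q" for q
  proof -
    let ?S = "{x. g x \<le> real_of_rat q}"
    have "{x \<in> space BM. g x \<le> real_of_rat q} \<in> sets BM" using g by measurable
    then have Ssets: "?S \<in> sets BM" by simp
    have "?S \<in> tail_events coordA" unfolding tail_events_def
    proof
      fix n :: nat
      show "?S \<in> sigma_sets (space BM) (\<Union> (coordA ` {n..}))"
        by (rule tail[OF Ssets]) (use inv in auto)
    qed
    then have "prob ?S = 0 \<or> prob ?S = 1" by (rule kolmogorov_0_1_law[OF sa ind])
    then show ?thesis
    proof
      assume 0: "prob ?S = 0"
      then have nP: "\<not> P q" by (simp add: P_def)
      have "prob (space BM - ?S) = 1" using prob_compl[OF Ssets] 0 by simp
      then have "AE x in BM. x \<in> space BM - ?S" by (rule AE_prob_1)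
      then show ?thesis by (rule AE_mp) (auto intro!: AE_I2 simp: nP)
    next
      assume 1: "prob ?S = 1"
      then have "AE x in BM. x \<in> ?S" by (rule AE_prob_1)
      then show ?thesis by (rule AE_mp) (auto intro!: AE_I2 simp: P_def 1)
    qed
  qed
  then have ae2: "AE x in BM. \<forall>q. (g x \<le> real_of_rat q) = P q"
    by (simp add: AE_all_countable)
  obtain x0 where x0: "\<forall>q. (g x0 \<le> real_of_rat q) = P q"
  proof -
    have "\<exists>x0. \<forall>q. (g x0 \<le> real_of_rat q) = P q"
    proof (rule ccontr)
      assume "\<not> ?thesis"
      then have "AE x in BM. False" using ae2 by (rule_tac AE_mp[OF ae2]) auto
      then show False by simp
    qed
    then show ?thesis using that by blast
  qed
  define C where "C = {y. finite {i. x0 i \<noteq> y i}}"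
  have "C \<subseteq> (\<lambda>F i. if i \<in> F then \<not> x0 i else x0 i) ` Collect finite"
  proof
    fix y assume "y \<in> C"
    then have fin: "finite {i. x0 i \<noteq> y i}" by (simp add: C_def)
    show "y \<in> (\<lambda>F i. if i \<in> F then \<not> x0 i else x0 i) ` Collect finite"
    proof (rule image_eqI[where x="{i. x0 i \<noteq> y i}"])
      show "y = (\<lambda>i. if i \<in> {i. x0 i \<noteq> y i} then \<not> x0 i else x0 i)"
        by (rule ext) simp
      show "{i. x0 i \<noteq> y i} \<in> Collect finite" using fin by simp
    qed
  qed
  then have "countable C"
    by (rule countable_subset) (intro countable_image countable_Collect_finite)
  then have ae3: "AE x in BM. x \<notin> C" by (intro AE_not_in countable_null)
  have "AE x in BM. False" using ae2 ae3
  proof eventually_elim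
    case (elim x)
    then have "\<forall>q. (g x \<le> real_of_rat q) = (g x0 \<le> real_of_rat q)" using x0 by simp
    then have "g x0 = g x" by (intro rat_sep[symmetric]) 
    then have "x \<in> C" using cls[of x0 x] by (simp add: C_def)
    then show False using elim by simp
  qed
  then show False by simp
qed


lemma bool_meas:
  assumes "{x \<in> space M. P x} \<in> sets M"
  shows "P \<in> measurable M BB"
proof -
  have "P \<in> measurable M (count_space (UNIV::bool set))" using assms by (simp add: Measurable.pred_def)
  moreover have "measurable M (count_space UNIV) = measurable M BB"
    by (rule measurable_cong_sets) simp_all
  ultimately show ?thesis by simp
qed

lemma coord_meas: "(\<lambda>x. n \<in> Hx x) \<in> measurable BM BB"
proof (rule bool_meas)
  define a where "a = fst (dec n)"
  define b where "b = fst (snd (dec n))"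
  define c where "c = snd (snd (dec n))"
  have fb: "finite b" using fin3_dec[of n] unfolding b_def fin3_def by (auto split: prod.splits)
  have E: "prod_emb UNIV (\<lambda>_. BB) b (Pi\<^sub>E b (\<lambda>i. {i \<in> c})) \<in> sets BM"
    unfolding BM_def by (rule sets_PiM_I) (auto simp: fb)
  have mem: "x \<in> prod_emb UNIV (\<lambda>_. BB) b (Pi\<^sub>E b (\<lambda>i. {i \<in> c})) \<longleftrightarrow> (\<forall>i\<in>b. x i = (i \<in> c))" for x
    by (simp add: prod_emb_iff restrict_PiE_iff Pi_iff)
  have hx: "n \<in> Hx x \<longleftrightarrow> a = {} \<and> c = {i \<in> b. x i}" for x
    by (simp add: Hx_def a_def b_def c_def)
  have ceq: "c = {i \<in> b. x i} \<longleftrightarrow> c \<subseteq> b \<and> (\<forall>i\<in>b. x i = (i \<in> c))" for x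
    by blast
  have "{x \<in> space BM. n \<in> Hx x} =
    (if a = {} \<and> c \<subseteq> b then prod_emb UNIV (\<lambda>_. BB) b (Pi\<^sub>E b (\<lambda>i. {i \<in> c})) else {})"
    unfolding hx ceq by (auto simp only: mem space_BM split: if_splits)
  then show "{x \<in> space BM. n \<in> Hx x} \<in> sets BM" using E by simp
qed

lemma phi_meas: "(\<lambda>x n. n \<in> Hx x) \<in> measurable BM (borel :: (nat \<Rightarrow> bool) measure)"
proof -
  have m: "(\<lambda>x n. n \<in> Hx x) \<in> measurable BM (Pi\<^sub>M UNIV (\<lambda>_. BB))"
    by (rule measurable_PiM_single') (simp_all add: coord_meas)
  have "sets (Pi\<^sub>M UNIV (\<lambda>_::nat. BB)) = sets (Pi\<^sub>M UNIV (\<lambda>_::nat. borel::bool measure))"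
    by (rule sets_PiM_cong) (simp_all add: sets_borel_eq_count_space)
  also have "\<dots> = sets (borel :: (nat \<Rightarrow> bool) measure)" by (rule sets_PiM_equal_borel)
  finally have "measurable BM (Pi\<^sub>M UNIV (\<lambda>_. BB)) = measurable BM (borel :: (nat \<Rightarrow> bool) measure)"
    by (intro measurable_cong_sets) simp_all
  then show ?thesis using m by simp
qed

theorem proposition8p3:
  shows "\<exists>G :: nat monoid. group G \<and> countable (carrier G) \<and> nilpotent_of_class G 2 \<and>
           \<not> smooth_on (Sub_measurable G) (subgroup_conj G)"
proof (intro exI conjI)
  show "group GG" by (rule group_GG)
  show "countable (carrier GG)" by simp
  show "nilpotent_of_class GG 2" by (rule nil_GG)
  show "\<not> smooth_on (Sub_measurable GG) (subgroup_conj GG)"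
  proof
    assume "smooth_on (Sub_measurable GG) (subgroup_conj GG)"
    then obtain f where f: "f \<in> measurable (Sub_measurable GG) (borel :: real measure)"
      and fE: "\<And>x y. x \<in> space (Sub_measurable GG) \<Longrightarrow> y \<in> space (Sub_measurable GG) \<Longrightarrow>
                 subgroup_conj GG x y \<longleftrightarrow> f x = f y"
      unfolding smooth_on_def by blast
    define phi where "phi = (\<lambda>x n. n \<in> Hx x)"
    have sp: "space (Sub_measurable GG) = Sub_space GG"
      by (simp add: Sub_measurable_def space_restrict_space)
    have phisp: "phi x \<in> space (Sub_measurable GG)" for x
      unfolding sp Sub_space_def phi_def using subgroup_Hx[of x] by blast
    have pm: "phi \<in> measurable BM (Sub_measurable GG)"
      unfolding Sub_measurable_def
      by (rule measurable_restrict_space2) (use phisp sp phi_meas in \<open>auto simp: phi_def\<close>)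
    have gm: "(\<lambda>x. f (phi x)) \<in> borel_measurable BM"
      using measurable_comp[OF pm f] by (simp add: comp_def)
    have key: "f (phi x) = f (phi y) \<longleftrightarrow> finite {i. x i \<noteq> y i}" for x y
      using fE[OF phisp phisp, of x y] conj_iff[of x y] by (simp add: phi_def)
    show False
      by (rule E0_nonsmooth[OF gm]) (simp_all add: key)
  qed
qed

end
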